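(* Let $\Gamma$ be a finite monoid generating set of $V$, let $w = a_n \cdots a_1 \in \Gamma^+$ ($a_i \in \Gamma$), and let $x \in \{0,1\}^*$ be such that the computation $x = x_0 \mapsto x_1 \mapsto \cdots \mapsto x_n$ with $x_i = a_i(x_{i-1})$ ($1\le i\le n$) is defined (each $x_i$ is defined under the partial action on $\{0,1\}^*$). Then there exist $s, z_0, z_1, \ldots, z_n \in \{0,1\}^*$ such that: (1) $x_i = z_i s$ and $|z_i| \le |w|\cdot \mathrm{maxlen}(\Gamma)$ for $0 \le i \le n$; (2) $z_{i+1} = a_{i+1}(z_i)$ for $0 \le i \le n-1$ (in particular $z_n = w(z_0)$); (3) there exists $k \in \{0,1,\ldots,n\}$ with $|z_k| \le \mathrm{maxlen}(\Gamma)$. Moreover, $w(x) \ne x$ and $v(x)$ is defined for every suffix $v$ of $w$ if and only if $w(z_0) \neq z_0$ and $v(z_0)$ is defined for every suffix $v$ of $w$.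
   Context: Thompson group $V$: a prefix code is a set $P \subseteq \{0,1\}^*$ in which no element is a proper prefix of another; it is maximal if it is contained in no larger prefix code. Each bijection $\varphi: P\to Q$ between finite maximal prefix codes defines a homeomorphism of $\{0,1\}^\omega$ by $pt \mapsto \varphi(p)t$; $V$ is the group of all such homeomorphisms. Each $\varphi\in V$ has a unique such table with the fewest entries (the maximally extended one); its domain and image codes are denoted $\mathrm{domC}(\varphi)$ and $\mathrm{imC}(\varphi)$. The partial action of $\varphi$ on $\{0,1\}^*$ is $\varphi(pu) = \varphi(p)u$ for $p\in\mathrm{domC}(\varphi)$, $u\in\{0,1\}^*$, and $\varphi(x)$ is undefined if $x \notin \mathrm{domC}(\varphi)\{0,1\}^*$. $\mathrm{maxlen}(\varphi) = \max\{|z| : z \in \mathrm{domC}(\varphi)\cup\mathrm{imC}(\varphi)\}$ and $\mathrm{maxlen}(S) = \max_{\varphi\in S}\mathrm{maxlen}(\varphi)$ for finite $S\subseteq V$. A monoid generating set $\Gamma\subseteq V$ is regarded as a finite alphabet; for $w = a_n\cdots a_1 \in \Gamma^+$, $w(\cdot)$ denotes the element $a_n\circ\cdots\circ a_1$ of $V$ ($a_1$ applied first), and its partial action on $\{0,1\}^*$ is that of this element of $V$. *)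

theory Defs
  imports Main "HOL-Library.Sublist"
begin

type_synonym cantor = "nat \<Rightarrow> bool"

definition prepend :: "bool list \<Rightarrow> cantor \<Rightarrow> cantor" where
  "prepend p t = (\<lambda>i. if i < length p then p ! i else t (i - length p))"

definition prefix_code :: "bool list set \<Rightarrow> bool" where
  "prefix_code P \<longleftrightarrow> (\<forall>p\<in>P. \<forall>q\<in>P. prefix p q \<longrightarrow> p = q)"

definition maximal_prefix_code :: "bool list set \<Rightarrow> bool" where
  "maximal_prefix_code P \<longleftrightarrow> prefix_code P \<and>
     (\<forall>Q. prefix_code Q \<and> P \<subseteq> Q \<longrightarrow> Q = P)"

definition is_table :: "(cantor \<Rightarrow> cantor) \<Rightarrow> bool list set \<Rightarrow> (bool list \<Rightarrow> bool list) \<Rightarrow> bool" where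
  "is_table f P \<phi> \<longleftrightarrow> finite P \<and> maximal_prefix_code P \<and> inj_on \<phi> P \<and>
     maximal_prefix_code (\<phi> ` P) \<and> (\<forall>p\<in>P. \<forall>t. f (prepend p t) = prepend (\<phi> p) t)"

definition ThompsonV :: "(cantor \<Rightarrow> cantor) set" where
  "ThompsonV = {f. \<exists>P \<phi>. is_table f P \<phi>}"

definition table_size :: "(cantor \<Rightarrow> cantor) \<Rightarrow> nat" where
  "table_size f = (LEAST n. \<exists>P \<phi>. is_table f P \<phi> \<and> card P = n)"

text \<open>Domain code of the (unique) table with fewest entries.\<close>
definition domC :: "(cantor \<Rightarrow> cantor) \<Rightarrow> bool list set" where
  "domC f = (THE P. (\<exists>\<phi>. is_table f P \<phi>) \<and> card P = table_size f)"

definition tbl :: "(cantor \<Rightarrow> cantor) \<Rightarrow> bool list \<Rightarrow> bool list" where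
  "tbl f p = (THE q. \<forall>t. f (prepend p t) = prepend q t)"

definition imC :: "(cantor \<Rightarrow> cantor) \<Rightarrow> bool list set" where
  "imC f = tbl f ` domC f"

definition act :: "(cantor \<Rightarrow> cantor) \<Rightarrow> bool list \<Rightarrow> bool list option" where
  "act f x = (if \<exists>p\<in>domC f. prefix p x
     then (let p = (THE p. p \<in> domC f \<and> prefix p x) in Some (tbl f p @ drop (length p) x))
     else None)"

definition maxlen :: "(cantor \<Rightarrow> cantor) \<Rightarrow> nat" where
  "maxlen f = Max (length ` (domC f \<union> imC f))"

definition maxlen_set :: "(cantor \<Rightarrow> cantor) set \<Rightarrow> nat" where
  "maxlen_set S = Max (maxlen ` S)"

text \<open>A word [a_1, ..., a_n] (list order = order of application) denotes a_n o ... o a_1.\<close>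
fun eval_word :: "(cantor \<Rightarrow> cantor) list \<Rightarrow> (cantor \<Rightarrow> cantor)" where
  "eval_word [] = id"
| "eval_word (a # w) = eval_word w \<circ> a"

definition monoid_gen_set_V :: "(cantor \<Rightarrow> cantor) set \<Rightarrow> bool" where
  "monoid_gen_set_V \<Gamma> \<longleftrightarrow> \<Gamma> \<subseteq> ThompsonV \<and>
     (\<forall>f\<in>ThompsonV. \<exists>ws. set ws \<subseteq> \<Gamma> \<and> eval_word ws = f)"

end

theory Submission
  imports Defs
begin

definition stk :: "nat \<Rightarrow> cantor \<Rightarrow> bool list" where
  "stk n a = map a [0..<n]"

definition aff :: "(cantor \<Rightarrow> cantor) \<Rightarrow> bool list \<Rightarrow> bool list \<Rightarrow> bool" where
  "aff f x y \<longleftrightarrow> (\<forall>t. f (prepend x t) = prepend y t)"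

lemma prepend_Nil[simp]: "prepend [] t = t"
  by (simp add: prepend_def)

lemma prepend_append: "prepend (p @ q) t = prepend p (prepend q t)"
  by (auto simp: prepend_def nth_append fun_eq_iff)

lemma stk_prepend: "n \<le> length p \<Longrightarrow> stk n (prepend p t) = take n p"
  by (auto simp: stk_def prepend_def intro!: nth_equalityI)

lemma stk_prepend_len[simp]: "stk (length p) (prepend p t) = p"
  by (simp add: stk_prepend)

lemma length_stk[simp]: "length (stk n a) = n"
  by (simp add: stk_def)

lemma prepend_stk: "prepend (stk n a) (\<lambda>i. a (i + n)) = a"
  by (auto simp: stk_def prepend_def fun_eq_iff)

lemma prepend_inj: "prepend p t = prepend p t' \<Longrightarrow> t = t'"
proof
  fix i assume "prepend p t = prepend p t'"
  hence "prepend p t (i + length p) = prepend p t' (i + length p)" by simp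
  thus "t i = t' i" by (simp add: prepend_def)
qed

lemma prepend_cmp:
  assumes "prepend p t = prepend q t'"
  shows "prefix p q \<or> prefix q p"
proof (cases "length p \<le> length q")
  case True
  have "stk (length p) (prepend q t') = take (length p) q" using True by (simp add: stk_prepend)
  hence "p = take (length p) q" using assms by (metis stk_prepend_len)
  thus ?thesis by (metis take_is_prefix)
next
  case False
  have "stk (length q) (prepend p t) = take (length q) p" using False by (simp add: stk_prepend)
  hence "q = take (length q) p" using assms by (metis stk_prepend_len)
  thus ?thesis by (metis take_is_prefix)
qed

lemma prefix_len_eq: "prefix p q \<Longrightarrow> length q \<le> length p \<Longrightarrow> p = q"
  by (auto simp: prefix_def)

lemma prepend_eq_len:
  assumes "prepend p t = prepend q t'" "length p = length q"
  shows "p = q \<and> t = t'"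
  using prepend_cmp[OF assms(1)] assms prefix_len_eq prepend_inj by (metis order.refl)

lemma prepend_all_eq:
  assumes "\<forall>t. prepend q t = prepend q' t"
  shows "q = q'"
proof -
  have c: "prefix q q' \<or> prefix q' q" using assms prepend_cmp by blast
  have "\<not> (prefix q q' \<and> q \<noteq> q')"
    if "\<forall>t. prepend q t = prepend q' t" for q q' 
  proof
    assume h: "prefix q q' \<and> q \<noteq> q'"
    then obtain r where r: "q' = q @ r" "r \<noteq> []" by (auto simp: prefix_def)
    define t where "t = (\<lambda>i::nat. \<not> r ! 0)"
    have "prepend q t = prepend q (prepend r t)" using that r by (simp add: prepend_append)
    hence "t = prepend r t" by (rule prepend_inj)
    hence "t 0 = prepend r t 0" by simp
    thus False using r(2) by (simp add: t_def prepend_def)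
  qed
  thus ?thesis using c assms by metis
qed

lemma aff_unique: "aff f x y \<Longrightarrow> aff f x y' \<Longrightarrow> y = y'"
  unfolding aff_def using prepend_all_eq by metis

lemma aff_ext: "aff f x y \<Longrightarrow> aff f (x @ u) (y @ u)"
  unfolding aff_def by (simp add: prepend_append)

lemma M1:
  assumes "maximal_prefix_code P"
  shows "\<exists>p\<in>P. prefix p u \<or> prefix u p"
proof (rule ccontr)
  assume h: "\<not> ?thesis"
  have pc: "prefix_code P" using assms by (simp add: maximal_prefix_code_def)
  have "prefix_code (insert u P)" using pc h by (auto simp: prefix_code_def)
  hence "insert u P = P" using assms by (auto simp: maximal_prefix_code_def)
  hence "u \<in> P" by blast
  thus False using h by blast
qed

lemma M2:
  assumes "finite P" "maximal_prefix_code P"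
  shows "\<exists>p\<in>P. \<exists>t. a = prepend p t"
proof -
  define N where "N = Suc (Max (length ` P))"
  obtain p where p: "p \<in> P" "prefix p (stk N a) \<or> prefix (stk N a) p" using M1[OF assms(2)] by blast
  have "length p < N" using p(1) assms(1) by (simp add: N_def le_imp_less_Suc)
  hence "prefix p (stk N a)" using p(2) prefix_length_le by fastforce
  then obtain r where r: "stk N a = p @ r" by (auto simp: prefix_def)
  have "a = prepend (p @ r) (\<lambda>i. a (i + N))" using prepend_stk[of N a] r by simp
  thus ?thesis using p(1) by (metis prepend_append)
qed

lemma M3:
  assumes "prefix_code P" "\<And>a. \<exists>p\<in>P. \<exists>t. a = prepend p t"
  shows "maximal_prefix_code P"
  unfolding maximal_prefix_code_def
proof (intro conjI assms(1) allI impI)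
  fix Q assume Q: "prefix_code Q \<and> P \<subseteq> Q"
  show "Q = P"
  proof
    show "Q \<subseteq> P"
    proof
      fix q assume q: "q \<in> Q"
      obtain p t where p: "p \<in> P" "prepend q (\<lambda>_. False) = prepend p t" using assms(2) by blast
      have "prefix q p \<or> prefix p q" using prepend_cmp[OF p(2)] .
      hence "q = p" using Q q p(1) by (auto simp: prefix_code_def)
      thus "q \<in> P" using p(1) by simp
    qed
  qed (use Q in auto)
qed

lemma M4:
  assumes "finite P" "maximal_prefix_code P" "Max (length ` P) \<le> length u"
  shows "\<exists>p\<in>P. prefix p u"
proof -
  obtain p t where p: "p \<in> P" "prepend u (\<lambda>_. False) = prepend p t" using M2[OF assms(1,2)] by blast
  have "length p \<le> length u" using p(1) assms by (meson Max_ge finite_imageI image_eqI le_trans)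
  thus ?thesis using prepend_cmp[OF p(2)] p(1) prefix_len_eq by metis
qed

lemma table_bij:
  assumes "is_table f P \<phi>"
  shows "bij f"
proof (rule bijI)
  have fin: "finite P" "maximal_prefix_code P" "maximal_prefix_code (\<phi> ` P)" "inj_on \<phi> P"
    and tb: "\<And>p t. p \<in> P \<Longrightarrow> f (prepend p t) = prepend (\<phi> p) t"
    using assms by (auto simp: is_table_def)
  show "inj f"
  proof
    fix a b assume ab: "f a = f b"
    obtain p t where p: "p \<in> P" "a = prepend p t" using M2[OF fin(1,2)] by blast
    obtain p' t' where p': "p' \<in> P" "b = prepend p' t'" using M2[OF fin(1,2)] by blast
    have "prepend (\<phi> p) t = prepend (\<phi> p') t'" using ab p p' tb by simp
    hence "prefix (\<phi> p) (\<phi> p') \<or> prefix (\<phi> p') (\<phi> p)" by (rule prepend_cmp)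
    hence e: "\<phi> p = \<phi> p'" using fin(3) p(1) p'(1) unfolding maximal_prefix_code_def prefix_code_def
      by (metis image_eqI)
    hence "p = p'" using fin(4) p(1) p'(1) by (meson inj_onD)
    moreover have "t = t'" using e \<open>prepend (\<phi> p) t = prepend (\<phi> p') t'\<close> prepend_inj by metis
    ultimately show "a = b" using p p' by simp
  qed
  show "surj f"
    unfolding surj_def
  proof
    fix b
    obtain q t where q: "q \<in> \<phi> ` P" "b = prepend q t" using M2[OF _ fin(3)] fin(1) by blast
    then obtain p where "p \<in> P" "q = \<phi> p" by blast
    hence "f (prepend p t) = b" using q tb by simp
    thus "\<exists>a. b = f a" by metis
  qed
qed

lemma table_intro:
  assumes "bij f" "finite P" "maximal_prefix_code P"
    and tb: "\<And>p t. p \<in> P \<Longrightarrow> f (prepend p t) = prepend (\<phi> p) t"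
  shows "is_table f P \<phi>"
proof -
  have pc: "prefix_code P" using assms(3) by (simp add: maximal_prefix_code_def)
  have injf: "inj f" using assms(1) bij_is_inj by blast
  have inj: "inj_on \<phi> P"
  proof
    fix p p' assume h: "p \<in> P" "p' \<in> P" "\<phi> p = \<phi> p'"
    have "f (prepend p (\<lambda>_. False)) = f (prepend p' (\<lambda>_. False))" using h tb by simp
    hence "prepend p (\<lambda>_. False) = prepend p' (\<lambda>_. False)" using injf by (meson injD)
    thus "p = p'" using prepend_cmp pc h by (metis prefix_code_def)
  qed
  have ipc: "prefix_code (\<phi> ` P)"
    unfolding prefix_code_def
  proof (intro ballI impI)
    fix a b assume ab: "a \<in> \<phi> ` P" "b \<in> \<phi> ` P" "prefix a b"
    then obtain p p' where pp: "p \<in> P" "p' \<in> P" "a = \<phi> p" "b = \<phi> p'" by blast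
    obtain r where r: "b = a @ r" using ab(3) by (auto simp: prefix_def)
    have "f (prepend p' (\<lambda>_. False)) = f (prepend p (prepend r (\<lambda>_. False)))"
      using tb[OF pp(1)] tb[OF pp(2)] pp r by (metis prepend_append)
    hence "prepend p' (\<lambda>_. False) = prepend p (prepend r (\<lambda>_. False))" using injf by (meson injD)
    hence "p = p'" using prepend_cmp pc pp by (metis prefix_code_def)
    thus "a = b" using pp by simp
  qed
  have imax: "maximal_prefix_code (\<phi> ` P)"
  proof (rule M3[OF ipc])
    fix b
    obtain a where a: "b = f a" using assms(1) by (metis bij_pointE)
    obtain p t where "p \<in> P" "a = prepend p t" using M2[OF assms(2,3)] by blast
    thus "\<exists>q\<in>\<phi> ` P. \<exists>t. b = prepend q t" using a tb by blast
  qed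
  show ?thesis unfolding is_table_def using assms(2,3) inj imax tb by blast
qed

lemma V_bij: "f \<in> ThompsonV \<Longrightarrow> bij f"
  unfolding ThompsonV_def using table_bij by blast

lemma table_aff:
  assumes "is_table f P \<phi>" "p \<in> P" "prefix p u"
  shows "aff f u (\<phi> p @ drop (length p) u)"
proof -
  have "aff f p (\<phi> p)" using assms(1,2) by (simp add: is_table_def aff_def)
  hence "aff f (p @ drop (length p) u) (\<phi> p @ drop (length p) u)" by (rule aff_ext)
  thus ?thesis using assms(3) by (metis append_take_drop_id prefix_def take_all_iff
      append_eq_conv_conj order.refl)
qed

lemma all_len_code:
  "finite {u::bool list. length u = N} \<and> maximal_prefix_code {u::bool list. length u = N}"
proof
  show "finite {u::bool list. length u = N}" using finite_lists_length_eq[of "UNIV::bool set" N] by simp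
  show "maximal_prefix_code {u::bool list. length u = N}"
  proof (rule M3)
    show "prefix_code {u::bool list. length u = N}"
      unfolding prefix_code_def using prefix_len_eq by fastforce
    fix a show "\<exists>p\<in>{u. length u = N}. \<exists>t. a = prepend p t"
      using prepend_stk[of N a] by (metis length_stk mem_Collect_eq)
  qed
qed

lemma V_comp:
  assumes "f \<in> ThompsonV" "g \<in> ThompsonV"
  shows "g \<circ> f \<in> ThompsonV"
proof -
  obtain P \<phi> where tf: "is_table f P \<phi>" using assms(1) by (auto simp: ThompsonV_def)
  obtain Q \<psi> where tg: "is_table g Q \<psi>" using assms(2) by (auto simp: ThompsonV_def)
  define N1 where "N1 = Max (length ` P)"
  define N2 where "N2 = Max (length ` Q)"
  define D where "D = {u::bool list. length u = N1 + N2}"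
  have ex: "\<exists>c. aff (g \<circ> f) u c" if u: "u \<in> D" for u
  proof -
    obtain p where p: "p \<in> P" "prefix p u"
      using M4[of P u] tf u by (auto simp: is_table_def D_def N1_def)
    have lp: "length p \<le> N1" using p(1) tf by (auto simp: is_table_def N1_def)
    define v where "v = \<phi> p @ drop (length p) u"
    have af: "aff f u v" unfolding v_def by (rule table_aff[OF tf p])
    have "N2 \<le> length v" using lp u by (simp add: v_def D_def)
    then obtain q where q: "q \<in> Q" "prefix q v"
      using M4[of Q v] tg by (auto simp: is_table_def N2_def)
    have ag: "aff g v (\<psi> q @ drop (length q) v)" by (rule table_aff[OF tg q])
    show ?thesis using af ag by (auto simp: aff_def)
  qed
  then obtain \<chi> where chi: "\<And>u. u \<in> D \<Longrightarrow> aff (g \<circ> f) u (\<chi> u)" by metis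
  have "is_table (g \<circ> f) D \<chi>"
  proof (rule table_intro)
    show "bij (g \<circ> f)" using V_bij assms bij_comp by blast
    show "finite D" "maximal_prefix_code D" using all_len_code by (auto simp: D_def)
    show "\<And>p t. p \<in> D \<Longrightarrow> (g \<circ> f) (prepend p t) = prepend (\<chi> p) t"
      using chi by (simp add: aff_def)
  qed
  thus ?thesis by (auto simp: ThompsonV_def)
qed

lemma V_id: "id \<in> ThompsonV"
proof -
  have "is_table id {[]} id"
  proof (rule table_intro)
    show "maximal_prefix_code {[]}"
      by (rule M3) (auto simp: prefix_code_def)
  qed auto
  thus ?thesis by (auto simp: ThompsonV_def)
qed

lemma V_word: "set ws \<subseteq> ThompsonV \<Longrightarrow> eval_word ws \<in> ThompsonV"
  by (induction ws) (auto simp: V_id V_comp)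

definition MinA :: "(cantor \<Rightarrow> cantor) \<Rightarrow> bool list set" where
  "MinA f = {x. (\<exists>y. aff f x y) \<and> (\<forall>x'. strict_prefix x' x \<longrightarrow> \<not> (\<exists>y. aff f x' y))}"

lemma min_sub:
  assumes tf: "is_table f P \<phi>" and bf: "bij f"
    and mn: "\<forall>P' \<phi>'. is_table f P' \<phi>' \<longrightarrow> card P \<le> card P'"
    and p: "p \<in> P"
  shows "p \<in> MinA f"
proof -
  have fin: "finite P" and mp: "maximal_prefix_code P"
    and tb: "\<And>p t. p \<in> P \<Longrightarrow> f (prepend p t) = prepend (\<phi> p) t"
    using tf by (auto simp: is_table_def)
  have pc: "prefix_code P" using mp by (simp add: maximal_prefix_code_def)
  have "aff f p (\<phi> p)" using tb p by (simp add: aff_def)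
  moreover have "\<not> (\<exists>y. aff f x y)" if sx: "strict_prefix x p" for x
  proof
    assume "\<exists>y. aff f x y"
    then obtain y where y: "aff f x y" by blast
    define E where "E = {q\<in>P. prefix x q}"
    define P' where "P' = (P - E) \<union> {x}"
    define \<phi>' where "\<phi>' = (\<lambda>q. if q = x then y else \<phi> q)"
    have xnP: "x \<notin> P" using sx p pc unfolding prefix_code_def strict_prefix_def by blast
    have tP': "is_table f P' \<phi>'"
    proof (rule table_intro[OF bf])
      show "finite P'" using fin by (simp add: P'_def)
      show "maximal_prefix_code P'"
      proof (rule M3)
        show "prefix_code P'"
          unfolding prefix_code_def
        proof (intro ballI impI)
          fix a b assume ab: "a \<in> P'" "b \<in> P'" "prefix a b"
          show "a = b"
          proof (cases "a = x")
            case True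
            then show ?thesis using ab by (auto simp: P'_def E_def)
          next
            case False
            hence aP: "a \<in> P" "\<not> prefix x a" using ab by (auto simp: P'_def E_def)
            show ?thesis
            proof (cases "b = x")
              case True
              hence "prefix a p" using ab(3) sx by (meson prefix_order.trans strict_prefix_def)
              hence "a = p" using pc aP p by (auto simp: prefix_code_def)
              thus ?thesis using aP sx by (simp add: strict_prefix_def)
            next
              case False
              thus ?thesis using ab aP pc by (auto simp: prefix_code_def P'_def)
            qed
          qed
        qed
        fix a
        obtain q t where q: "q \<in> P" "a = prepend q t" using M2[OF fin mp] by blast
        show "\<exists>q\<in>P'. \<exists>t. a = prepend q t"
        proof (cases "prefix x q")
          case True
          then obtain r where "q = x @ r" by (auto simp: prefix_def)
          thus ?thesis using q by (auto simp: P'_def prepend_append)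
        next
          case False
          thus ?thesis using q by (auto simp: P'_def E_def)
        qed
      qed
      fix q t assume "q \<in> P'"
      thus "f (prepend q t) = prepend (\<phi>' q) t"
        using tb y xnP by (auto simp: P'_def \<phi>'_def aff_def)
    qed
    have E2: "\<exists>p2\<in>E. p2 \<noteq> p"
    proof -
      have lx: "length x < length p" using sx by (rule prefix_length_less)
      define b where "b = p ! length x"
      obtain p2 t where p2: "p2 \<in> P" "prepend (x @ [\<not> b]) (\<lambda>_. False) = prepend p2 t"
        using M2[OF fin mp] by blast
      have c1: "prefix p2 (x @ [\<not> b]) \<or> prefix (x @ [\<not> b]) p2" using prepend_cmp[OF p2(2)[symmetric]] .
      have np: "p2 \<noteq> p"
      proof
        assume "p2 = p"
        with c1 have "prefix p (x @ [\<not> b]) \<or> prefix (x @ [\<not> b]) p" by simp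
        moreover have "\<not> prefix (x @ [\<not> b]) p"
        proof
          assume "prefix (x @ [\<not> b]) p"
          hence "p ! length x = (x @ [\<not> b]) ! length x" by (metis length_append_singleton lessI prefix_def nth_append)
          thus False by (simp add: b_def)
        qed
        moreover have "length (x @ [\<not> b]) \<le> length p" using lx by simp
        ultimately show False using prefix_len_eq by (metis \<open>\<not> prefix (x @ [\<not> b]) p\<close>)
      qed
      have "prefix x p2"
      proof (cases "prefix (x @ [\<not> b]) p2")
        case True thus ?thesis by (metis prefix_order.trans prefixI)
      next
        case False
        hence "prefix p2 (x @ [\<not> b])" using c1 by simp
        hence "prefix p2 x \<or> p2 = x @ [\<not> b]" by (metis prefix_snoc)
        thus ?thesis
        proof
          assume "prefix p2 x"
          hence "prefix p2 p" using sx by (meson prefix_order.trans strict_prefix_def)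
          hence "p2 = p" using pc p2(1) p by (auto simp: prefix_code_def)
          thus ?thesis using np by simp
        qed simp
      qed
      thus ?thesis using p2(1) np by (auto simp: E_def)
    qed
    have pE: "p \<in> E" using p sx by (auto simp: E_def strict_prefix_def)
    have finE: "finite E" using fin by (simp add: E_def)
    have "card E \<ge> 2"
    proof -
      obtain p2 where "p2 \<in> E" "p2 \<noteq> p" using E2 by blast
      hence "{p, p2} \<subseteq> E" using pE by simp
      hence "card {p, p2} \<le> card E" using finE card_mono by blast
      thus ?thesis using \<open>p2 \<noteq> p\<close> by simp
    qed
    moreover have "card P' \<le> card (P - E) + 1"
      unfolding P'_def using card_Un_le[of "P - E" "{x}"] by simp
    moreover have "card (P - E) = card P - card E" using finE by (simp add: E_def card_Diff_subset)
    moreover have "card E \<le> card P" using fin by (simp add: E_def card_mono)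
    ultimately have "card P' < card P" by linarith
    thus False using mn tP' by fastforce
  qed
  ultimately show ?thesis by (auto simp: MinA_def)
qed

lemma min_eq:
  assumes tf: "is_table f P \<phi>" and bf: "bij f"
    and mn: "\<forall>P' \<phi>'. is_table f P' \<phi>' \<longrightarrow> card P \<le> card P'"
  shows "P = MinA f"
proof
  show "P \<subseteq> MinA f" using min_sub[OF tf bf mn] by blast
  show "MinA f \<subseteq> P"
  proof
    fix m assume m: "m \<in> MinA f"
    have fin: "finite P" and mp: "maximal_prefix_code P"
      and tb: "\<And>p t. p \<in> P \<Longrightarrow> f (prepend p t) = prepend (\<phi> p) t"
      using tf by (auto simp: is_table_def)
    obtain p t where p: "p \<in> P" "prepend m (\<lambda>_. False) = prepend p t" using M2[OF fin mp] by blast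
    have c: "prefix m p \<or> prefix p m" using prepend_cmp[OF p(2)] .
    have pm: "p \<in> MinA f" using min_sub[OF tf bf mn p(1)] .
    show "m \<in> P"
    proof (cases "m = p")
      case True thus ?thesis using p by simp
    next
      case False
      hence "strict_prefix m p \<or> strict_prefix p m" using c by (auto simp: strict_prefix_def)
      thus ?thesis using m pm by (auto simp: MinA_def)
    qed
  qed
qed

lemma domC_props:
  assumes "f \<in> ThompsonV"
  shows "domC f = MinA f \<and> (\<exists>\<phi>. is_table f (domC f) \<phi>)"
proof -
  have ex: "\<exists>n. \<exists>P \<phi>. is_table f P \<phi> \<and> card P = n" using assms by (auto simp: ThompsonV_def)
  obtain P \<phi> where P: "is_table f P \<phi>" "card P = table_size f"
    using LeastI_ex[OF ex] unfolding table_size_def by blast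
  have mn: "\<forall>P' \<phi>'. is_table f P' \<phi>' \<longrightarrow> card P \<le> card P'"
    using P(2) unfolding table_size_def by (metis (mono_tags, lifting) Least_le)
  have bf: "bij f" using assms by (rule V_bij)
  have PM: "P = MinA f" by (rule min_eq[OF P(1) bf mn])
  have "domC f = MinA f"
    unfolding domC_def
  proof (rule the_equality)
    show "(\<exists>\<phi>. is_table f (MinA f) \<phi>) \<and> card (MinA f) = table_size f" using P PM by blast
    fix P' assume h: "(\<exists>\<phi>. is_table f P' \<phi>) \<and> card P' = table_size f"
    then obtain \<phi>' where t': "is_table f P' \<phi>'" by blast
    have "\<forall>P'' \<phi>''. is_table f P'' \<phi>'' \<longrightarrow> card P' \<le> card P''"
      using h mn P(2) by simp
    thus "P' = MinA f" by (rule min_eq[OF t' bf])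
  qed
  thus ?thesis using P PM by metis
qed

lemma tbl_eq:
  assumes "is_table f P \<phi>" "p \<in> P"
  shows "tbl f p = \<phi> p"
  unfolding tbl_def
proof (rule the_equality)
  show "\<forall>t. f (prepend p t) = prepend (\<phi> p) t" using assms by (simp add: is_table_def)
  fix q assume "\<forall>t. f (prepend p t) = prepend q t"
  thus "q = \<phi> p" using assms prepend_all_eq by (metis is_table_def)
qed

lemma domC_cover:
  assumes "f \<in> ThompsonV" "aff f x y"
  shows "\<exists>p\<in>domC f. prefix p x"
proof -
  define n where "n = (LEAST n. \<exists>y. aff f (take n x) y)"
  have ex: "\<exists>y. aff f (take (length x) x) y" using assms(2) by auto
  have n1: "\<exists>y. aff f (take n x) y" unfolding n_def by (rule LeastI_ex) (use ex in blast)
  have n2: "n \<le> length x" unfolding n_def by (rule Least_le) (use ex in blast)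
  have "take n x \<in> MinA f"
    unfolding MinA_def
  proof (intro CollectI conjI n1 allI impI)
    fix x' assume sx: "strict_prefix x' (take n x)"
    have lx: "length x' < n" using prefix_length_less[OF sx] n2 by simp
    obtain r where r: "take n x = x' @ r" using sx by (auto simp: strict_prefix_def prefix_def)
    have "take (length x') (take n x) = x'" using r by simp
    hence "x' = take (length x') x" using lx by (simp add: min_absorb1)
    moreover have "\<not> (\<exists>y. aff f (take (length x') x) y)"
      using not_less_Least[of "length x'" "\<lambda>n. \<exists>y. aff f (take n x) y"] lx unfolding n_def by blast
    ultimately show "\<not> (\<exists>y. aff f x' y)" by simp
  qed
  thus ?thesis using domC_props[OF assms(1)] by (metis take_is_prefix)
qed

lemma act_char:
  assumes "f \<in> ThompsonV" "p \<in> domC f" "prefix p x"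
  shows "act f x = Some (tbl f p @ drop (length p) x)"
proof -
  obtain \<phi> where t: "is_table f (domC f) \<phi>" using domC_props[OF assms(1)] by blast
  have pc: "prefix_code (domC f)" using t by (simp add: is_table_def maximal_prefix_code_def)
  have "(THE p. p \<in> domC f \<and> prefix p x) = p"
  proof (rule the_equality)
    show "p \<in> domC f \<and> prefix p x" using assms by simp
    fix p' assume "p' \<in> domC f \<and> prefix p' x"
    thus "p' = p" using assms pc prefix_same_cases unfolding prefix_code_def by metis
  qed
  thus ?thesis using assms unfolding act_def by auto
qed

lemma act_Some:
  assumes "f \<in> ThompsonV" "act f x = Some y"
  shows "\<exists>p\<in>domC f. prefix p x \<and> y = tbl f p @ drop (length p) x"
proof -
  have "\<exists>p\<in>domC f. prefix p x" using assms(2) by (auto simp: act_def split: if_splits)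
  then obtain p where "p \<in> domC f" "prefix p x" by blast
  thus ?thesis using act_char[OF assms(1)] assms(2) by auto
qed

lemma act_aff:
  assumes "f \<in> ThompsonV" "act f x = Some y"
  shows "aff f x y"
proof -
  obtain p where p: "p \<in> domC f" "prefix p x" "y = tbl f p @ drop (length p) x"
    using act_Some[OF assms] by blast
  obtain \<phi> where t: "is_table f (domC f) \<phi>" using domC_props[OF assms(1)] by blast
  show ?thesis using table_aff[OF t p(1,2)] tbl_eq[OF t p(1)] p(3) by simp
qed

lemma aff_act:
  assumes "f \<in> ThompsonV" "aff f x y"
  shows "act f x = Some y"
proof -
  obtain p where p: "p \<in> domC f" "prefix p x" using domC_cover[OF assms] by blast
  obtain \<phi> where t: "is_table f (domC f) \<phi>" using domC_props[OF assms(1)] by blast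
  have "aff f x (tbl f p @ drop (length p) x)" using table_aff[OF t p] tbl_eq[OF t p(1)] by simp
  hence "y = tbl f p @ drop (length p) x" using assms(2) aff_unique by blast
  thus ?thesis using act_char[OF assms(1) p] by simp
qed

lemma eval_word_snoc: "eval_word (ws @ [a]) = a \<circ> eval_word ws"
  by (induction ws) auto

lemma aff_comp: "aff f x y \<Longrightarrow> aff a y z \<Longrightarrow> aff (a \<circ> f) x z"
  by (simp add: aff_def)

lemma drop_suffix_len:
  assumes "L \<le> length u"
  shows "drop (length (a @ u) - L) (a @ u) = drop (length u - L) u"
  using assms by (simp add: drop_append)

lemma take_suffix_len:
  assumes "L \<le> length u"
  shows "take (length (a @ u) - L) (a @ u) = a @ take (length u - L) u"
  using assms by (simp add: take_append)

lemma maxlen_bound: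
  assumes "finite \<Gamma>" "a \<in> \<Gamma>" "a \<in> ThompsonV" "p \<in> domC a"
  shows "length p \<le> maxlen_set \<Gamma> \<and> length (tbl a p) \<le> maxlen_set \<Gamma>"
proof -
  obtain \<phi> where t: "is_table a (domC a) \<phi>" using domC_props[OF assms(3)] by blast
  have fin: "finite (domC a \<union> imC a)" using t by (simp add: is_table_def imC_def)
  have m: "maxlen a \<le> maxlen_set \<Gamma>" using assms(1,2) by (simp add: maxlen_set_def)
  have "length p \<le> maxlen a" unfolding maxlen_def using fin assms(4) by (simp add: Max_ge)
  moreover have "length (tbl a p) \<le> maxlen a" unfolding maxlen_def using fin assms(4)
    by (simp add: Max_ge imC_def)
  ultimately show ?thesis using m by linarith
qed

theorem lemma3p1:
  fixes \<Gamma> :: "(cantor \<Rightarrow> cantor) set"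
    and w :: "(cantor \<Rightarrow> cantor) list"
    and xs :: "nat \<Rightarrow> bool list"
    and n :: nat
  assumes "finite \<Gamma>" and "monoid_gen_set_V \<Gamma>"
    and "set w \<subseteq> \<Gamma>" and "w \<noteq> []" and "n = length w"
    and "\<forall>i<n. act (w ! i) (xs i) = Some (xs (Suc i))"
  shows "\<exists>s zs. (\<forall>i\<le>n. xs i = zs i @ s \<and> length (zs i) \<le> n * maxlen_set \<Gamma>)
      \<and> (\<forall>i<n. act (w ! i) (zs i) = Some (zs (Suc i)))
      \<and> act (eval_word w) (zs 0) = Some (zs n)
      \<and> (\<exists>k\<le>n. length (zs k) \<le> maxlen_set \<Gamma>)
      \<and> ((act (eval_word w) (xs 0) \<noteq> Some (xs 0) \<and>
            (\<forall>k\<in>{1..n}. act (eval_word (take k w)) (xs 0) \<noteq> None))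
         \<longleftrightarrow> (act (eval_word w) (zs 0) \<noteq> Some (zs 0) \<and>
            (\<forall>k\<in>{1..n}. act (eval_word (take k w)) (zs 0) \<noteq> None)))"
proof -
  define d where "d = maxlen_set \<Gamma>"
  have GV: "\<Gamma> \<subseteq> ThompsonV" using assms(2) by (simp add: monoid_gen_set_V_def)
  have wG: "\<And>i. i < n \<Longrightarrow> w ! i \<in> \<Gamma>" using assms(3,5) nth_mem by blast
  have wV: "\<And>i. i < n \<Longrightarrow> w ! i \<in> ThompsonV" using wG GV by blast
  have "\<forall>i<n. \<exists>p. p \<in> domC (w ! i) \<and> prefix p (xs i) \<and>
          xs (Suc i) = tbl (w ! i) p @ drop (length p) (xs i)"
    using act_Some wV assms(6) by blast
  then obtain P where P: "\<And>i. i < n \<Longrightarrow> P i \<in> domC (w ! i) \<and> prefix (P i) (xs i) \<and>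
          xs (Suc i) = tbl (w ! i) (P i) @ drop (length (P i)) (xs i)" by metis
  define q where "q i = tbl (w ! i) (P i)" for i
  define u where "u i = drop (length (P i)) (xs i)" for i
  have xi: "\<And>i. i < n \<Longrightarrow> xs i = P i @ u i" using P by (metis u_def append_take_drop_id prefix_def
        append_eq_conv_conj)
  have xSi: "\<And>i. i < n \<Longrightarrow> xs (Suc i) = q i @ u i" using P by (simp add: q_def u_def)
  have lb: "\<And>i. i < n \<Longrightarrow> length (P i) \<le> d \<and> length (q i) \<le> d"
    unfolding d_def q_def using maxlen_bound[OF assms(1) wG wV] P by blast
  have n0: "0 < n" using assms(4,5) by simp
  define L where "L = Min ((\<lambda>i. length (u i)) ` {..<n})"
  have Lle: "\<And>i. i < n \<Longrightarrow> L \<le> length (u i)" unfolding L_def by simp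
  obtain j where j: "j < n" "length (u j) = L"
  proof -
    have "L \<in> (\<lambda>i. length (u i)) ` {..<n}" unfolding L_def using n0 by (intro Min_in) auto
    thus ?thesis using that by auto
  qed
  define s where "s = drop (length (xs 0) - L) (xs 0)"
  have S: "drop (length (xs i) - L) (xs i) = s \<and> L \<le> length (xs i)" if "i \<le> n" for i
    using that
  proof (induction i)
    case 0
    have "L \<le> length (xs 0)" using xi[OF n0] Lle[OF n0] by simp
    thus ?case by (simp add: s_def)
  next
    case (Suc i)
    hence i: "i < n" by simp
    have "drop (length (xs (Suc i)) - L) (xs (Suc i)) = drop (length (u i) - L) (u i)"
      using xSi[OF i] drop_suffix_len[OF Lle[OF i]] by simp
    also have "\<dots> = drop (length (xs i) - L) (xs i)"
      using xi[OF i] drop_suffix_len[OF Lle[OF i]] by simp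
    also have "\<dots> = s" using Suc by simp
    finally show ?case using xSi[OF i] Lle[OF i] by simp
  qed
  define zs where "zs i = take (length (xs i) - L) (xs i)" for i
  have xz: "\<And>i. i \<le> n \<Longrightarrow> xs i = zs i @ s" using S by (metis zs_def append_take_drop_id)
  have zi: "\<And>i. i < n \<Longrightarrow> zs i = P i @ take (length (u i) - L) (u i)"
    using xi Lle take_suffix_len unfolding zs_def by metis
  have zSi: "\<And>i. i < n \<Longrightarrow> zs (Suc i) = q i @ take (length (u i) - L) (u i)"
    using xSi Lle take_suffix_len unfolding zs_def by metis
  have step: "\<And>i. i < n \<Longrightarrow> act (w ! i) (zs i) = Some (zs (Suc i))"
  proof -
    fix i assume i: "i < n"
    have "act (w ! i) (zs i) = Some (tbl (w ! i) (P i) @ drop (length (P i)) (zs i))"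
      using act_char[OF wV[OF i], of "P i" "zs i"] P[OF i] zi[OF i] by simp
    thus "act (w ! i) (zs i) = Some (zs (Suc i))" using zi[OF i] zSi[OF i] by (simp add: q_def)
  qed
  have up: "\<And>i. i < n \<Longrightarrow> length (zs (Suc i)) \<le> length (zs i) + d"
    using zi zSi lb by fastforce
  have down: "\<And>i. i < n \<Longrightarrow> length (zs i) \<le> length (zs (Suc i)) + d"
    using zi zSi lb by fastforce
  have zj: "length (zs j) \<le> d" using zi[OF j(1)] j lb[OF j(1)] by simp
  have zj1: "length (zs (Suc j)) \<le> d" using zSi[OF j(1)] j lb[OF j(1)] by simp
  have B1: "\<And>k. j + 1 + k \<le> n \<Longrightarrow> length (zs (j + 1 + k)) \<le> d + k * d"
  proof -
    fix k show "j + 1 + k \<le> n \<Longrightarrow> length (zs (j + 1 + k)) \<le> d + k * d"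
    proof (induction k)
      case 0 thus ?case using zj1 by simp
    next
      case (Suc k)
      have "length (zs (Suc (j + 1 + k))) \<le> length (zs (j + 1 + k)) + d"
        using up Suc.prems by simp
      thus ?case using Suc by simp
    qed
  qed
  have B2: "\<And>k. k \<le> j \<Longrightarrow> length (zs (j - k)) \<le> d + k * d"
  proof -
    fix k show "k \<le> j \<Longrightarrow> length (zs (j - k)) \<le> d + k * d"
    proof (induction k)
      case 0 thus ?case using zj by simp
    next
      case (Suc k)
      have e: "Suc (j - Suc k) = j - k" using Suc.prems by simp
      have "length (zs (j - Suc k)) \<le> length (zs (Suc (j - Suc k))) + d"
        using down Suc.prems j(1) by simp
      thus ?case using Suc e by simp
    qed
  qed
  have bound: "\<And>i. i \<le> n \<Longrightarrow> length (zs i) \<le> n * d"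
  proof -
    fix i assume i: "i \<le> n"
    show "length (zs i) \<le> n * d"
    proof (cases "i \<le> j")
      case True
      have "length (zs i) \<le> d + (j - i) * d" using B2[of "j - i"] True by simp
      also have "\<dots> = Suc (j - i) * d" by simp
      also have "\<dots> \<le> n * d" using j(1) by (intro mult_le_mono1) simp
      finally show ?thesis .
    next
      case False
      have "length (zs i) \<le> d + (i - j - 1) * d" using B1[of "i - j - 1"] False i by simp
      also have "\<dots> = Suc (i - j - 1) * d" by simp
      also have "\<dots> \<le> n * d" using i False by (intro mult_le_mono1) simp
      finally show ?thesis .
    qed
  qed
  have wordV: "\<And>k. eval_word (take k w) \<in> ThompsonV"
    using V_word GV assms(3) set_take_subset by (metis order.trans)
  have compz: "\<And>k. k \<le> n \<Longrightarrow> aff (eval_word (take k w)) (zs 0) (zs k)"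
  proof -
    fix k show "k \<le> n \<Longrightarrow> aff (eval_word (take k w)) (zs 0) (zs k)"
    proof (induction k)
      case 0 thus ?case by (simp add: aff_def)
    next
      case (Suc k)
      hence k: "k < n" by simp
      have "take (Suc k) w = take k w @ [w ! k]" using k assms(5) by (simp add: take_Suc_conv_app_nth)
      moreover have "aff (w ! k) (zs k) (zs (Suc k))" using act_aff[OF wV[OF k] step[OF k]] .
      ultimately show ?case using Suc aff_comp by (simp add: eval_word_snoc del: o_apply)
    qed
  qed
  have compx: "\<And>k. k \<le> n \<Longrightarrow> aff (eval_word (take k w)) (xs 0) (xs k)"
  proof -
    fix k show "k \<le> n \<Longrightarrow> aff (eval_word (take k w)) (xs 0) (xs k)"
    proof (induction k)
      case 0 thus ?case by (simp add: aff_def)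
    next
      case (Suc k)
      hence k: "k < n" by simp
      have "take (Suc k) w = take k w @ [w ! k]" using k assms(5) by (simp add: take_Suc_conv_app_nth)
      moreover have "aff (w ! k) (xs k) (xs (Suc k))" using act_aff[OF wV[OF k]] assms(6) k by blast
      ultimately show ?case using Suc aff_comp by (simp add: eval_word_snoc del: o_apply)
    qed
  qed
  have actz: "\<And>k. k \<le> n \<Longrightarrow> act (eval_word (take k w)) (zs 0) = Some (zs k)"
    using aff_act wordV compz by blast
  have actx: "\<And>k. k \<le> n \<Longrightarrow> act (eval_word (take k w)) (xs 0) = Some (xs k)"
    using aff_act wordV compx by blast
  have wn: "take n w = w" using assms(5) by simp
  have az: "act (eval_word w) (zs 0) = Some (zs n)" using actz[of n] wn by simp
  have ax: "act (eval_word w) (xs 0) = Some (xs n)" using actx[of n] wn by simp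
  have eq: "xs n = xs 0 \<longleftrightarrow> zs n = zs 0" using xz[of n] xz[of 0] by simp
  have iff: "((act (eval_word w) (xs 0) \<noteq> Some (xs 0) \<and>
            (\<forall>k\<in>{1..n}. act (eval_word (take k w)) (xs 0) \<noteq> None))
         \<longleftrightarrow> (act (eval_word w) (zs 0) \<noteq> Some (zs 0) \<and>
            (\<forall>k\<in>{1..n}. act (eval_word (take k w)) (zs 0) \<noteq> None)))"
    using az ax eq actz actx by auto
  show ?thesis
    apply (rule exI[of _ s], rule exI[of _ zs])
    using xz bound step az iff zj j(1) unfolding d_def by (auto intro!: exI[of _ j])
qed

end
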